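(* Let $R$ be a Noetherian ring and $\Gamma$ an arbitrary finitely generated group with a word metric. Every surjective $R[\Gamma]$-homomorphism $\phi\colon F\to G$ between properly generated $R[\Gamma]$-modules is boundedly bicontrolled as a homomorphism of $\Gamma$-filtered $R$-modules $s(F,\Sigma_F)\to s(G,\Sigma_G)$, for finite generating sets $\Sigma_F,\Sigma_G$ with respect to which $F$ and $G$ are lean and insular.
   Context: Notation: $S[b]$ is the metric $b$-enlargement of $S\subset\Gamma$, $x[b]$ the $b$-ball about $x$. For a finitely generated $R[\Gamma]$-module $F$ with finite generating set $\Sigma$, $s(F,\Sigma)$ is the $\Gamma$-filtered $R$-module with $F(S)=$ the $R$-submodule generated by $\{s\sigma: s\in S,\sigma\in\Sigma\}$. A $\Gamma$-filtered module is lean if $F(S)\subset\sum_{x\in S}F(x[D])$ for some $D\ge0$ and all $S$, insular if $F(S)\cap F(U)\subset F(S[d]\cap U[d])$ for some $d\ge0$ and all $S,U$. A finitely generated $R[\Gamma]$-module $F$ is properly generated if $s(F,\Sigma)$ is lean and insular for some finite generating set $\Sigma$ (the properties then hold for every finite generating set). A homomorphism $f\colon F\to F'$ of filtered modules is boundedly bicontrolled if there is $b\ge0$ such that for all $S$: $f(F(S))\subset F'(S[b])$ and $f(F)\cap F'(S)\subset f(F(S[b]))$. *)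

theory Defs
  imports Main
begin

definition left_ideal :: "'r::ring_1 set \<Rightarrow> bool" where
  "left_ideal I \<longleftrightarrow> 0 \<in> I \<and> (\<forall>x\<in>I. \<forall>y\<in>I. x + y \<in> I) \<and> (\<forall>r. \<forall>x\<in>I. r * x \<in> I)"

definition right_ideal :: "'r::ring_1 set \<Rightarrow> bool" where
  "right_ideal I \<longleftrightarrow> 0 \<in> I \<and> (\<forall>x\<in>I. \<forall>y\<in>I. x + y \<in> I) \<and> (\<forall>r. \<forall>x\<in>I. x * r \<in> I)"

definition noetherian_ring :: "'r::ring_1 itself \<Rightarrow> bool" where
  "noetherian_ring _ \<longleftrightarrow>
     (\<forall>I::'r set. left_ideal I \<longrightarrow>
        (\<exists>T. finite T \<and> T \<subseteq> I \<and> I = {x. \<exists>c. x = (\<Sum>t\<in>T. c t * t)}))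
   \<and> (\<forall>I::'r set. right_ideal I \<longrightarrow>
        (\<exists>T. finite T \<and> T \<subseteq> I \<and> I = {x. \<exists>c. x = (\<Sum>t\<in>T. t * c t)}))"

text \<open>The group \<Gamma> is a type of class group_add (not necessarily commutative),
 written additively: g + h is the group product, -g the inverse, 0 the unit.\<close>

definition generates :: "'g::group_add set \<Rightarrow> bool" where
  "generates A \<longleftrightarrow> (\<forall>g. \<exists>xs. set xs \<subseteq> A \<union> uminus ` A \<and> sum_list xs = g)"

definition word_length :: "'g::group_add set \<Rightarrow> 'g \<Rightarrow> nat" where
  "word_length A g = (LEAST n. \<exists>xs. length xs = n \<and> set xs \<subseteq> A \<union> uminus ` A \<and> sum_list xs = g)"

definition word_dist :: "'g::group_add set \<Rightarrow> 'g \<Rightarrow> 'g \<Rightarrow> nat" where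
  "word_dist A x y = word_length A (- x + y)"

definition enlarge :: "'g::group_add set \<Rightarrow> 'g set \<Rightarrow> nat \<Rightarrow> 'g set" where
  "enlarge A S b = {y. \<exists>x\<in>S. word_dist A x y \<le> b}"

definition ball_w :: "'g::group_add set \<Rightarrow> 'g \<Rightarrow> nat \<Rightarrow> 'g set" where
  "ball_w A x b = {y. word_dist A x y \<le> b}"

text \<open>A (left) R[\<Gamma>]-module on the abelian group 'm: an R-scalar multiplication
  sm and an action ac of \<Gamma> by R-linear maps.\<close>
definition rg_module ::
  "('r::ring_1 \<Rightarrow> 'm::ab_group_add \<Rightarrow> 'm) \<Rightarrow> ('g::group_add \<Rightarrow> 'm \<Rightarrow> 'm) \<Rightarrow> bool" where
  "rg_module sm ac \<longleftrightarrow>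
     (\<forall>r x y. sm r (x + y) = sm r x + sm r y)
   \<and> (\<forall>r s x. sm (r + s) x = sm r x + sm s x)
   \<and> (\<forall>r s x. sm (r * s) x = sm r (sm s x))
   \<and> (\<forall>x. sm 1 x = x)
   \<and> (\<forall>g x y. ac g (x + y) = ac g x + ac g y)
   \<and> (\<forall>g r x. ac g (sm r x) = sm r (ac g x))
   \<and> (\<forall>x. ac 0 x = x)
   \<and> (\<forall>g h x. ac (g + h) x = ac g (ac h x))"

definition rspan :: "('r::ring_1 \<Rightarrow> 'm::ab_group_add \<Rightarrow> 'm) \<Rightarrow> 'm set \<Rightarrow> 'm set" where
  "rspan sm X = {v. \<exists>T c. finite T \<and> T \<subseteq> X \<and> v = (\<Sum>y\<in>T. sm (c y) y)}"

definition fin_gen_set ::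
  "('r::ring_1 \<Rightarrow> 'm::ab_group_add \<Rightarrow> 'm) \<Rightarrow> ('g::group_add \<Rightarrow> 'm \<Rightarrow> 'm) \<Rightarrow> 'm set \<Rightarrow> bool" where
  "fin_gen_set sm ac \<Sigma> \<longleftrightarrow> finite \<Sigma> \<and> rspan sm {ac g \<sigma> | g \<sigma>. \<sigma> \<in> \<Sigma>} = UNIV"

definition sfilt ::
  "('r::ring_1 \<Rightarrow> 'm::ab_group_add \<Rightarrow> 'm) \<Rightarrow> ('g::group_add \<Rightarrow> 'm \<Rightarrow> 'm) \<Rightarrow> 'm set \<Rightarrow> 'g set \<Rightarrow> 'm set" where
  "sfilt sm ac \<Sigma> S = rspan sm {ac s \<sigma> | s \<sigma>. s \<in> S \<and> \<sigma> \<in> \<Sigma>}"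

definition sum_fam :: "'i set \<Rightarrow> ('i \<Rightarrow> 'm::ab_group_add set) \<Rightarrow> 'm set" where
  "sum_fam S M = {v. \<exists>T f. finite T \<and> T \<subseteq> S \<and> (\<forall>x\<in>T. f x \<in> M x) \<and> v = (\<Sum>x\<in>T. f x)}"

definition lean :: "'g::group_add set \<Rightarrow> ('g set \<Rightarrow> 'm::ab_group_add set) \<Rightarrow> bool" where
  "lean A F \<longleftrightarrow> (\<exists>D. \<forall>S. F S \<subseteq> sum_fam S (\<lambda>x. F (ball_w A x D)))"

definition insular :: "'g::group_add set \<Rightarrow> ('g set \<Rightarrow> 'm::ab_group_add set) \<Rightarrow> bool" where
  "insular A F \<longleftrightarrow> (\<exists>d. \<forall>S U. F S \<inter> F U \<subseteq> F (enlarge A S d \<inter> enlarge A U d))"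

definition bdd_bicontrolled ::
  "'g::group_add set \<Rightarrow> ('m::ab_group_add \<Rightarrow> 'n::ab_group_add) \<Rightarrow> ('g set \<Rightarrow> 'm set) \<Rightarrow> ('g set \<Rightarrow> 'n set) \<Rightarrow> bool" where
  "bdd_bicontrolled A f F F' \<longleftrightarrow>
     (\<exists>b. \<forall>S. f ` F S \<subseteq> F' (enlarge A S b) \<and> range f \<inter> F' S \<subseteq> f ` F (enlarge A S b))"

definition rg_hom ::
  "('r::ring_1 \<Rightarrow> 'm::ab_group_add \<Rightarrow> 'm) \<Rightarrow> ('g::group_add \<Rightarrow> 'm \<Rightarrow> 'm) \<Rightarrow>
   ('r \<Rightarrow> 'n::ab_group_add \<Rightarrow> 'n) \<Rightarrow> ('g \<Rightarrow> 'n \<Rightarrow> 'n) \<Rightarrow> ('m \<Rightarrow> 'n) \<Rightarrow> bool" where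
  "rg_hom smF acF smG acG f \<longleftrightarrow>
     (\<forall>x y. f (x + y) = f x + f y) \<and> (\<forall>r x. f (smF r x) = smG r (f x))
   \<and> (\<forall>g x. f (acF g x) = acG g (f x))"

end

theory Submission
  imports Defs
begin

lemma addhom_0:
  fixes h :: "'m::ab_group_add \<Rightarrow> 'n::ab_group_add"
  assumes "\<And>x y. h (x + y) = h x + h y" shows "h 0 = 0"
proof -
  have "h 0 = h 0 + h 0" using assms[of 0 0] by simp
  thus ?thesis by simp
qed

lemma addhom_sum:
  fixes h :: "'m::ab_group_add \<Rightarrow> 'n::ab_group_add"
  assumes "\<And>x y. h (x + y) = h x + h y" shows "h (sum f T) = (\<Sum>y\<in>T. h (f y))"
proof (induction T rule: infinite_finite_induct)
  case (infinite A) then show ?case using addhom_0[OF assms] by simp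
next
  case empty then show ?case using addhom_0[OF assms] by simp
next
  case (insert x F) then show ?case by (simp add: assms)
qed

lemma sm_0: assumes "rg_module sm ac" shows "sm 0 x = 0"
proof -
  have "sm 0 x = sm 0 x + sm 0 x" using assms unfolding rg_module_def by (metis add_0)
  thus ?thesis by simp
qed

lemma rspan_intro:
  assumes "finite T" "T \<subseteq> X" "v = (\<Sum>y\<in>T. sm (c y) y)"
  shows "v \<in> rspan sm X"
  unfolding rspan_def by (rule CollectI, rule exI[of _ T], rule exI[of _ c]) (use assms in simp)

lemma rspan_elim:
  assumes "v \<in> rspan sm X"
  obtains T c where "finite T" "T \<subseteq> X" "v = (\<Sum>y\<in>T. sm (c y) y)"
  using assms unfolding rspan_def mem_Collect_eq by blast

lemma rspan_0: "0 \<in> rspan sm X"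
  unfolding rspan_def by (rule CollectI, rule exI[of _ "{}"]) auto

lemma rspan_gen: assumes "rg_module sm ac" "y \<in> X" shows "y \<in> rspan sm X"
  unfolding rspan_def using assms unfolding rg_module_def
  by (intro CollectI exI[of _ "{y}"] exI[of _ "\<lambda>_. 1"]) auto

lemma rspan_mono: "X \<subseteq> Y \<Longrightarrow> rspan sm X \<subseteq> rspan sm Y"
  unfolding rspan_def by blast

lemma rspan_add:
  assumes m: "rg_module sm ac" and x: "x \<in> rspan sm X" and y: "y \<in> rspan sm X"
  shows "x + y \<in> rspan sm X"
proof -
  from x obtain T1 c1 where 1: "finite T1" "T1 \<subseteq> X" "x = (\<Sum>y\<in>T1. sm (c1 y) y)"
    by (rule rspan_elim)
  from y obtain T2 c2 where 2: "finite T2" "T2 \<subseteq> X" "y = (\<Sum>y\<in>T2. sm (c2 y) y)"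
    by (rule rspan_elim)
  define d1 where "d1 z = (if z \<in> T1 then c1 z else 0)" for z
  define d2 where "d2 z = (if z \<in> T2 then c2 z else 0)" for z
  have add: "sm (r + s) z = sm r z + sm s z" for r s z using m unfolding rg_module_def by blast
  have e1: "(\<Sum>y\<in>T1. sm (c1 y) y) = (\<Sum>y\<in>T1 \<union> T2. sm (d1 y) y)"
    using 1(1) 2(1)
    by (intro sum.mono_neutral_cong_left) (auto simp: d1_def sm_0[OF m])
  have e2: "(\<Sum>y\<in>T2. sm (c2 y) y) = (\<Sum>y\<in>T1 \<union> T2. sm (d2 y) y)"
    using 1(1) 2(1)
    by (intro sum.mono_neutral_cong_left) (auto simp: d2_def sm_0[OF m])
  have "x + y = (\<Sum>z\<in>T1 \<union> T2. sm (d1 z + d2 z) z)"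
    unfolding 1(3) 2(3) e1 e2 add sum.distrib ..
  moreover have "finite (T1 \<union> T2)" "T1 \<union> T2 \<subseteq> X" using 1 2 by auto
  ultimately show ?thesis by (intro rspan_intro)
qed

lemma rspan_sum:
  assumes m: "rg_module sm ac" and "\<forall>i\<in>I. f i \<in> rspan sm X"
  shows "sum f I \<in> rspan sm X"
  using assms(2)
proof (induction I rule: infinite_finite_induct)
  case (insert x F) then show ?case using rspan_add[OF m] by simp
qed (auto simp: rspan_0)

lemma rspan_smult:
  assumes m: "rg_module sm ac" and x: "x \<in> rspan sm X"
  shows "sm r x \<in> rspan sm X"
proof -
  obtain T c where 1: "finite T" "T \<subseteq> X" "x = (\<Sum>y\<in>T. sm (c y) y)"
    using x by (rule rspan_elim)
  have h: "sm r (a + b) = sm r a + sm r b" for a b using m unfolding rg_module_def by blast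
  have mul: "sm r (sm s z) = sm (r * s) z" for s z using m unfolding rg_module_def by metis
  have "sm r x = (\<Sum>y\<in>T. sm (r * c y) y)"
    unfolding 1(3) addhom_sum[of "sm r", OF h] mul ..
  thus ?thesis using 1 by (intro rspan_intro)
qed

lemma rspan_image:
  assumes m2: "rg_module sm2 ac2"
    and hadd: "\<And>x y. h (x + y) = h x + h y" and hsm: "\<And>r x. h (sm1 r x) = sm2 r (h x)"
    and gen: "\<forall>y\<in>X. h y \<in> rspan sm2 Y" and x: "x \<in> rspan sm1 X"
  shows "h x \<in> rspan sm2 Y"
proof -
  obtain T c where 1: "finite T" "T \<subseteq> X" "x = (\<Sum>y\<in>T. sm1 (c y) y)"
    using x by (rule rspan_elim)
  have "h x = (\<Sum>y\<in>T. sm2 (c y) (h y))" unfolding 1(3) addhom_sum[of h, OF hadd] hsm ..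
  also have "\<dots> \<in> rspan sm2 Y"
    using 1(2) gen by (intro rspan_sum[OF m2] ballI rspan_smult[OF m2]) auto
  finally show ?thesis .
qed

lemma rspan_lift:
  assumes m1: "rg_module sm1 ac1"
    and hadd: "\<And>x y. h (x + y) = h x + h y" and hsm: "\<And>r x. h (sm1 r x) = sm2 r (h x)"
    and gen: "\<forall>y\<in>X. \<exists>z\<in>rspan sm1 W. h z = y" and x: "x \<in> rspan sm2 X"
  shows "x \<in> h ` rspan sm1 W"
proof -
  obtain T c where 1: "finite T" "T \<subseteq> X" "x = (\<Sum>y\<in>T. sm2 (c y) y)"
    using x by (rule rspan_elim)
  obtain z where z: "\<forall>y\<in>X. z y \<in> rspan sm1 W \<and> h (z y) = y" using gen by metis
  have "h (\<Sum>y\<in>T. sm1 (c y) (z y)) = x"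
    unfolding 1(3) addhom_sum[of h, OF hadd] hsm using z 1(2) by (intro sum.cong) auto
  moreover have "(\<Sum>y\<in>T. sm1 (c y) (z y)) \<in> rspan sm1 W"
    using 1(2) z by (intro rspan_sum[OF m1] ballI rspan_smult[OF m1]) auto
  ultimately show ?thesis by blast
qed

lemma translate:
  fixes A :: "'g::group_add set"
  assumes m: "rg_module sm ac" and x: "x \<in> sfilt sm ac \<Sigma> (ball_w A 0 b)" and s: "s \<in> S"
  shows "ac s x \<in> sfilt sm ac \<Sigma> (enlarge A S b)"
  using x unfolding sfilt_def
proof (rule rspan_image[OF m, rotated 3])
  show "ac s (x + y) = ac s x + ac s y" for x y using m unfolding rg_module_def by blast
  show "ac s (sm r x) = sm r (ac s x)" for r x using m unfolding rg_module_def by blast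
  show "\<forall>y\<in>{ac g \<sigma> |g \<sigma>. g \<in> ball_w A 0 b \<and> \<sigma> \<in> \<Sigma>}.
          ac s y \<in> rspan sm {ac g \<sigma> |g \<sigma>. g \<in> enlarge A S b \<and> \<sigma> \<in> \<Sigma>}"
  proof
    fix y assume "y \<in> {ac g \<sigma> |g \<sigma>. g \<in> ball_w A 0 b \<and> \<sigma> \<in> \<Sigma>}"
    then obtain g \<sigma> where y: "y = ac g \<sigma>" "word_length A g \<le> b" "\<sigma> \<in> \<Sigma>"
      unfolding ball_w_def word_dist_def by auto
    have "ac s y = ac (s + g) \<sigma>" using m y(1) unfolding rg_module_def by metis
    moreover have "s + g \<in> enlarge A S b"
      unfolding enlarge_def word_dist_def using s y(2)
      by (intro CollectI bexI[of _ s]) (simp_all add: add.assoc[symmetric])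
    ultimately show "ac s y \<in> rspan sm {ac g \<sigma> |g \<sigma>. g \<in> enlarge A S b \<and> \<sigma> \<in> \<Sigma>}"
      using y(3) by (intro rspan_gen[OF m]) blast
  qed
qed

lemma sfilt_ball_mono: "b \<le> b' \<Longrightarrow> sfilt sm ac \<Sigma> (ball_w A x b) \<subseteq> sfilt sm ac \<Sigma> (ball_w A x b')"
  unfolding sfilt_def ball_w_def by (intro rspan_mono) fastforce

lemma bound1:
  fixes A :: "'g::group_add set"
  assumes "fin_gen_set sm ac \<Sigma>"
  shows "\<exists>b. x \<in> sfilt sm ac \<Sigma> (ball_w A 0 b)"
proof -
  have "x \<in> rspan sm {ac g \<sigma> | g \<sigma>. \<sigma> \<in> \<Sigma>}" using assms unfolding fin_gen_set_def by auto
  then obtain T c where 1: "finite T" "T \<subseteq> {ac g \<sigma> | g \<sigma>. \<sigma> \<in> \<Sigma>}" "x = (\<Sum>y\<in>T. sm (c y) y)"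
    by (rule rspan_elim)
  have "\<forall>y\<in>T. \<exists>g. \<exists>\<sigma>\<in>\<Sigma>. y = ac g \<sigma>" using 1(2) by blast
  then have "\<exists>g. \<forall>y\<in>T. \<exists>\<sigma>\<in>\<Sigma>. y = ac (g y) \<sigma>" by (rule bchoice)
  then obtain g where g: "\<forall>y\<in>T. \<exists>\<sigma>\<in>\<Sigma>. y = ac (g y) \<sigma>" by blast
  define b where "b = (\<Sum>y\<in>T. word_length A (g y))"
  have "\<forall>y\<in>T. word_length A (g y) \<le> b"
    unfolding b_def using 1(1) by (auto intro: member_le_sum)
  hence "T \<subseteq> {ac g \<sigma> | g \<sigma>. g \<in> ball_w A 0 b \<and> \<sigma> \<in> \<Sigma>}"
    using g unfolding ball_w_def word_dist_def by fastforce
  hence "x \<in> sfilt sm ac \<Sigma> (ball_w A 0 b)" unfolding sfilt_def using 1 by (intro rspan_intro)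
  thus ?thesis ..
qed

lemma boundX:
  fixes A :: "'g::group_add set"
  assumes "fin_gen_set sm ac \<Sigma>" "finite X"
  shows "\<exists>b. \<forall>x\<in>X. x \<in> sfilt sm ac \<Sigma> (ball_w A 0 b)"
proof -
  have "\<forall>x. \<exists>b. x \<in> sfilt sm ac \<Sigma> (ball_w A 0 b)" using bound1[OF assms(1)] by blast
  then have "\<exists>bb. \<forall>x. x \<in> sfilt sm ac \<Sigma> (ball_w A 0 (bb x))" by (rule choice)
  then obtain bb where bb: "\<forall>x. x \<in> sfilt sm ac \<Sigma> (ball_w A 0 (bb x))" by blast
  define b where "b = (\<Sum>x\<in>X. bb x)"
  have "\<forall>x\<in>X. x \<in> sfilt sm ac \<Sigma> (ball_w A 0 b)"
  proof
    fix x assume "x \<in> X"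
    hence "bb x \<le> b" unfolding b_def using assms(2) by (auto intro: member_le_sum)
    thus "x \<in> sfilt sm ac \<Sigma> (ball_w A 0 b)" using bb sfilt_ball_mono by blast
  qed
  thus ?thesis ..
qed

lemma enlarge_mono: "b \<le> b' \<Longrightarrow> enlarge A S b \<subseteq> enlarge A S b'"
  unfolding enlarge_def by (auto intro: order_trans)

lemma sfilt_mono: "S \<subseteq> S' \<Longrightarrow> sfilt sm ac \<Sigma> S \<subseteq> sfilt sm ac \<Sigma> S'"
  unfolding sfilt_def by (intro rspan_mono) auto

theorem lemma3p5:
  fixes A :: "'g::group_add set"
    and smF :: "'r::ring_1 \<Rightarrow> 'm::ab_group_add \<Rightarrow> 'm" and acF :: "'g \<Rightarrow> 'm \<Rightarrow> 'm"
    and smG :: "'r \<Rightarrow> 'n::ab_group_add \<Rightarrow> 'n" and acG :: "'g \<Rightarrow> 'n \<Rightarrow> 'n"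
    and \<Sigma>F :: "'m set" and \<Sigma>G :: "'n set" and \<phi> :: "'m \<Rightarrow> 'n"
  assumes "noetherian_ring TYPE('r)"
    and "finite A" and "generates A"
    and "rg_module smF acF" and "rg_module smG acG"
    and "fin_gen_set smF acF \<Sigma>F" and "lean A (sfilt smF acF \<Sigma>F)" and "insular A (sfilt smF acF \<Sigma>F)"
    and "fin_gen_set smG acG \<Sigma>G" and "lean A (sfilt smG acG \<Sigma>G)" and "insular A (sfilt smG acG \<Sigma>G)"
    and "rg_hom smF acF smG acG \<phi>" and "surj \<phi>"
  shows "bdd_bicontrolled A \<phi> (sfilt smF acF \<Sigma>F) (sfilt smG acG \<Sigma>G)"
proof -
  note mF = assms(4) and mG = assms(5)
  have padd: "\<phi> (x + y) = \<phi> x + \<phi> y" for x y using assms(12) unfolding rg_hom_def by blast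
  have psm: "\<phi> (smF r x) = smG r (\<phi> x)" for r x using assms(12) unfolding rg_hom_def by blast
  have pac: "\<phi> (acF g x) = acG g (\<phi> x)" for g x using assms(12) unfolding rg_hom_def by blast
  have fF: "finite \<Sigma>F" using assms(6) unfolding fin_gen_set_def by blast
  have fG: "finite \<Sigma>G" using assms(9) unfolding fin_gen_set_def by blast
  have "\<exists>b1. \<forall>y\<in>\<phi> ` \<Sigma>F. y \<in> sfilt smG acG \<Sigma>G (ball_w A 0 b1)"
    by (rule boundX[OF assms(9)]) (use fF in simp)
  then obtain b1 where b1: "\<forall>y\<in>\<phi> ` \<Sigma>F. y \<in> sfilt smG acG \<Sigma>G (ball_w A 0 b1)" by (elim exE)
  define f where "f = inv \<phi>"
  have f: "\<forall>\<tau>. \<phi> (f \<tau>) = \<tau>" unfolding f_def using assms(13) by (simp add: surj_f_inv_f)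
  have "\<exists>b2. \<forall>y\<in>f ` \<Sigma>G. y \<in> sfilt smF acF \<Sigma>F (ball_w A 0 b2)"
    by (rule boundX[OF assms(6)]) (use fG in simp)
  then obtain b2 where b2: "\<forall>y\<in>f ` \<Sigma>G. y \<in> sfilt smF acF \<Sigma>F (ball_w A 0 b2)" by (elim exE)
  define b where "b = max b1 b2"
  have part1: "\<phi> ` sfilt smF acF \<Sigma>F S \<subseteq> sfilt smG acG \<Sigma>G (enlarge A S b)" for S
  proof
    fix z assume "z \<in> \<phi> ` sfilt smF acF \<Sigma>F S"
    then obtain x where x: "x \<in> sfilt smF acF \<Sigma>F S" "z = \<phi> x" by blast
    have "\<phi> x \<in> sfilt smG acG \<Sigma>G (enlarge A S b1)"
      using x(1) unfolding sfilt_def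
    proof (rule rspan_image[where h=\<phi>, OF mG padd psm, rotated])
      show "\<forall>y\<in>{acF s \<sigma> |s \<sigma>. s \<in> S \<and> \<sigma> \<in> \<Sigma>F}.
              \<phi> y \<in> rspan smG {acG s \<sigma> |s \<sigma>. s \<in> enlarge A S b1 \<and> \<sigma> \<in> \<Sigma>G}"
      proof
        fix y assume "y \<in> {acF s \<sigma> |s \<sigma>. s \<in> S \<and> \<sigma> \<in> \<Sigma>F}"
        then obtain s \<sigma> where y: "y = acF s \<sigma>" "s \<in> S" "\<sigma> \<in> \<Sigma>F" by blast
        have "acG s (\<phi> \<sigma>) \<in> sfilt smG acG \<Sigma>G (enlarge A S b1)"
          using translate[OF mG _ y(2)] b1 y(3) by simp
        thus "\<phi> y \<in> rspan smG {acG s \<sigma> |s \<sigma>. s \<in> enlarge A S b1 \<and> \<sigma> \<in> \<Sigma>G}"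
          unfolding y(1) pac sfilt_def .
      qed
    qed
    moreover have "sfilt smG acG \<Sigma>G (enlarge A S b1) \<subseteq> sfilt smG acG \<Sigma>G (enlarge A S b)"
      by (intro sfilt_mono enlarge_mono) (simp add: b_def)
    ultimately show "z \<in> sfilt smG acG \<Sigma>G (enlarge A S b)" using x(2) by blast
  qed
  have part2: "range \<phi> \<inter> sfilt smG acG \<Sigma>G S \<subseteq> \<phi> ` sfilt smF acF \<Sigma>F (enlarge A S b)" for S
  proof
    fix z assume "z \<in> range \<phi> \<inter> sfilt smG acG \<Sigma>G S"
    hence z: "z \<in> rspan smG {acG s \<sigma> |s \<sigma>. s \<in> S \<and> \<sigma> \<in> \<Sigma>G}" unfolding sfilt_def by blast
    have "z \<in> \<phi> ` sfilt smF acF \<Sigma>F (enlarge A S b2)"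
      unfolding sfilt_def
    proof (rule rspan_lift[where h=\<phi>, OF mF padd psm _ z])
      show "\<forall>y\<in>{acG s \<sigma> |s \<sigma>. s \<in> S \<and> \<sigma> \<in> \<Sigma>G}.
              \<exists>z\<in>rspan smF {acF s \<sigma> |s \<sigma>. s \<in> enlarge A S b2 \<and> \<sigma> \<in> \<Sigma>F}. \<phi> z = y"
      proof
        fix y assume "y \<in> {acG s \<sigma> |s \<sigma>. s \<in> S \<and> \<sigma> \<in> \<Sigma>G}"
        then obtain s \<tau> where y: "y = acG s \<tau>" "s \<in> S" "\<tau> \<in> \<Sigma>G" by blast
        have "acF s (f \<tau>) \<in> sfilt smF acF \<Sigma>F (enlarge A S b2)"
          using translate[OF mF _ y(2)] b2 y(3) by simp
        moreover have "\<phi> (acF s (f \<tau>)) = y" using pac f y(1) by simp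
        ultimately show "\<exists>z\<in>rspan smF {acF s \<sigma> |s \<sigma>. s \<in> enlarge A S b2 \<and> \<sigma> \<in> \<Sigma>F}. \<phi> z = y"
          unfolding sfilt_def by blast
      qed
    qed
    moreover have "sfilt smF acF \<Sigma>F (enlarge A S b2) \<subseteq> sfilt smF acF \<Sigma>F (enlarge A S b)"
      by (intro sfilt_mono enlarge_mono) (simp add: b_def)
    ultimately show "z \<in> \<phi> ` sfilt smF acF \<Sigma>F (enlarge A S b)" by blast
  qed
  show ?thesis unfolding bdd_bicontrolled_def using part1 part2 by (intro exI[of _ b] allI conjI)
qed

end
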